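(* Let $G=(X,\Sigma,\longrightarrow,X_0)$ be a plant and $R=(Z,\Sigma,\longrightarrow,Z_0)$ a specification. If $S=(Y,\Sigma,\longrightarrow,Y_0)$ is a $\Sigma_{uc}$-admissible supervisor and $\Phi$ is a cc-simulation from $S\|G$ to $R$, then $E(\Phi)=\{\theta_y:y\in Y\}$, where $\theta_y=\{(x,z):((y,x),z)\in\Phi\text{ and }(y,x)\text{ is reachable in }S\|G\}$, is a $\Sigma_{ucr}$-controllability set from $G$ to $R$.
   Context: An automaton is a 4-tuple $A=(Q,\Sigma,\longrightarrow,Q_0)$ with state set $Q$, finite event set $\Sigma$, ${\longrightarrow}\subseteq Q\times\Sigma\times Q$ and $\emptyset\neq Q_0\subseteq Q$. Write $q\xrightarrow{\sigma}q'$ for $(q,\sigma,q')\in{\longrightarrow}$, $q\xrightarrow{\sigma}$ if some such $q'$ exists; extend to strings. A state is reachable if it is reached from an initial state by some string. Events are partitioned into uncontrollable $\Sigma_{uc}$ and controllable $\Sigma_c$; $\Sigma_r\subseteq\Sigma$ is a fixed set of required events. $S\|G=(Y\times X,\Sigma,\longrightarrow,Y_0\times X_0)$ with $(y,x)\xrightarrow{\sigma}(y',x')$ iff $y\xrightarrow{\sigma}y'$ and $x\xrightarrow{\sigma}x'$. $S$ is $\Sigma_{uc}$-admissible w.r.t. $G$ if for every reachable $(y,x)$ of $S\|G$ and $\sigma\in\Sigma_{uc}$, $x\xrightarrow{\sigma}$ implies $(y,x)\xrightarrow{\sigma}$. For automata $A_1,A_2$ with state sets $Q_1,Q_2$ and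 initial sets $Q_{01},Q_{02}$, $\Phi\subseteq Q_1\times Q_2$ is a cc-simulation if (initial state) every $q_0\in Q_{01}$ has $p_0\in Q_{02}$ with $(q_0,p_0)\in\Phi$; (forward) for $(q,p)\in\Phi$, $\sigma\in\Sigma$, $q\xrightarrow{\sigma}q'$ there is $p'$ with $p\xrightarrow{\sigma}p'$, $(q',p')\in\Phi$; ($\Sigma_r$-backward) for $(q,p)\in\Phi$, $\sigma\in\Sigma_r$, $p\xrightarrow{\sigma}p'$ there is $q'$ with $q\xrightarrow{\sigma}q'$, $(q',p')\in\Phi$. For $W,W'\subseteq X\times Z$: $\mathit{match}_{G,R}(W,\sigma,W')$ iff for all $(x,z)\in W$ and $x\xrightarrow{\sigma}x'$ there is $z'$ with $z\xrightarrow{\sigma}z'$ and $(x',z')\in W'$. $E\subseteq\wp(X\times Z)$ is a $\Sigma_{ucr}$-controllability set from $G$ to $R$ if: (istate) some $W_0\in E$ satisfies $\forall x_0\in X_0\,\exists z_0\in Z_0\,((x_0,z_0)\in W_0)$; (a) for every $W\in E$, $\sigma\in\Sigma_{uc}$ there is $W'\in E$ with $\mathit{match}_{G,R}(W,\sigma,W')$; (b) for every $W\in E$, $(x,z)\in W$, $\sigma\in\Sigma_r$, $z\xrightarrow{\sigma}z'$, there exist $x'$, $W'\in E$ with $x\xrightarrow{\sigma}x'$, $(x',z')\in W'$, $\mathit{match}_{G,R}(W,\sigma,W')$. *)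

theory Defs
  imports Main
begin

text \<open>An automaton (Q, Sigma, -->, Q0): the state set Q is the type 'q, the finite event
set Sigma is the (finite) type 'e, the transition relation and the initial states are fields.\<close>

record ('q, 'e) automaton =
  trans :: "('q \<times> 'e \<times> 'q) set"
  init  :: "'q set"

definition is_automaton :: "('q, 'e::finite) automaton \<Rightarrow> bool" where
  "is_automaton A \<longleftrightarrow> init A \<noteq> {}"

definition step :: "('q, 'e) automaton \<Rightarrow> 'q \<Rightarrow> 'e \<Rightarrow> 'q \<Rightarrow> bool" where
  "step A q e q' \<longleftrightarrow> (q, e, q') \<in> trans A"

definition enabled :: "('q, 'e) automaton \<Rightarrow> 'q \<Rightarrow> 'e \<Rightarrow> bool" where
  "enabled A q e \<longleftrightarrow> (\<exists>q'. step A q e q')"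

fun steps :: "('q, 'e) automaton \<Rightarrow> 'q \<Rightarrow> 'e list \<Rightarrow> 'q \<Rightarrow> bool" where
  "steps A q [] q' \<longleftrightarrow> q' = q"
| "steps A q (e # es) q' \<longleftrightarrow> (\<exists>q''. step A q e q'' \<and> steps A q'' es q')"

definition reachable :: "('q, 'e) automaton \<Rightarrow> 'q \<Rightarrow> bool" where
  "reachable A q \<longleftrightarrow> (\<exists>q0 \<in> init A. \<exists>s. steps A q0 s q)"

definition sync :: "('y, 'e) automaton \<Rightarrow> ('x, 'e) automaton \<Rightarrow> ('y \<times> 'x, 'e) automaton" where
  "sync S G = \<lparr> trans = {((y, x), e, (y', x')) | y x e y' x'. step S y e y' \<and> step G x e x'},
                init = init S \<times> init G \<rparr>"

definition admissible :: "'e set \<Rightarrow> ('y, 'e) automaton \<Rightarrow> ('x, 'e) automaton \<Rightarrow> bool" where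
  "admissible Euc S G \<longleftrightarrow>
     (\<forall>y x. reachable (sync S G) (y, x) \<longrightarrow>
        (\<forall>e \<in> Euc. enabled G x e \<longrightarrow> enabled (sync S G) (y, x) e))"

definition cc_simulation :: "'e set \<Rightarrow> ('q, 'e) automaton \<Rightarrow> ('p, 'e) automaton \<Rightarrow> ('q \<times> 'p) set \<Rightarrow> bool" where
  "cc_simulation Er A1 A2 Phi \<longleftrightarrow>
     (\<forall>q0 \<in> init A1. \<exists>p0 \<in> init A2. (q0, p0) \<in> Phi) \<and>
     (\<forall>q p e q'. (q, p) \<in> Phi \<longrightarrow> step A1 q e q' \<longrightarrow> (\<exists>p'. step A2 p e p' \<and> (q', p') \<in> Phi)) \<and>
     (\<forall>q p e p'. (q, p) \<in> Phi \<longrightarrow> e \<in> Er \<longrightarrow> step A2 p e p' \<longrightarrow> (\<exists>q'. step A1 q e q' \<and> (q', p') \<in> Phi))"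

definition match :: "('x, 'e) automaton \<Rightarrow> ('z, 'e) automaton \<Rightarrow> ('x \<times> 'z) set \<Rightarrow> 'e \<Rightarrow> ('x \<times> 'z) set \<Rightarrow> bool" where
  "match G R W e W' \<longleftrightarrow>
     (\<forall>x z x'. (x, z) \<in> W \<longrightarrow> step G x e x' \<longrightarrow> (\<exists>z'. step R z e z' \<and> (x', z') \<in> W'))"

definition controllability_set ::
  "'e set \<Rightarrow> 'e set \<Rightarrow> ('x, 'e) automaton \<Rightarrow> ('z, 'e) automaton \<Rightarrow> ('x \<times> 'z) set set \<Rightarrow> bool" where
  "controllability_set Euc Er G R E \<longleftrightarrow>
     (\<exists>W0 \<in> E. \<forall>x0 \<in> init G. \<exists>z0 \<in> init R. (x0, z0) \<in> W0) \<and>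
     (\<forall>W \<in> E. \<forall>e \<in> Euc. \<exists>W' \<in> E. match G R W e W') \<and>
     (\<forall>W \<in> E. \<forall>x z e z'. (x, z) \<in> W \<longrightarrow> e \<in> Er \<longrightarrow> step R z e z' \<longrightarrow>
        (\<exists>x' W'. step G x e x' \<and> W' \<in> E \<and> (x', z') \<in> W' \<and> match G R W e W'))"

definition theta :: "('y, 'e) automaton \<Rightarrow> ('x, 'e) automaton \<Rightarrow> (('y \<times> 'x) \<times> 'z) set \<Rightarrow> 'y \<Rightarrow> ('x \<times> 'z) set" where
  "theta S G Phi y = {(x, z). ((y, x), z) \<in> Phi \<and> reachable (sync S G) (y, x)}"

definition E_of :: "('y, 'e) automaton \<Rightarrow> ('x, 'e) automaton \<Rightarrow> (('y \<times> 'x) \<times> 'z) set \<Rightarrow> ('x \<times> 'z) set set" where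
  "E_of S G Phi = {theta S G Phi y | y. True}"

end

theory Submission
  imports Defs
begin

lemma steps_snoc: "steps A q s q1 \<Longrightarrow> step A q1 e q2 \<Longrightarrow> steps A q (s @ [e]) q2"
  by (induction s arbitrary: q) auto

lemma reach_step: "reachable A q \<Longrightarrow> step A q e q' \<Longrightarrow> reachable A q'"
  unfolding reachable_def by (meson steps_snoc)

lemma reach_init: "q \<in> init A \<Longrightarrow> reachable A q"
  unfolding reachable_def by (metis steps.simps(1))

lemma sync_step: "step (sync S G) (y, x) e (y', x') \<longleftrightarrow> step S y e y' \<and> step G x e x'"
  unfolding step_def sync_def by auto

theorem lemma4:
  fixes G :: "('x, 'e::finite) automaton" and R :: "('z, 'e) automaton"
    and S :: "('y, 'e) automaton" and Phi :: "(('y \<times> 'x) \<times> 'z) set"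
    and Euc Er :: "'e set"
  assumes "is_automaton G" and "is_automaton R" and "is_automaton S"
    and "admissible Euc S G"
    and "cc_simulation Er (sync S G) R Phi"
  shows "controllability_set Euc Er G R (E_of S G Phi)"
proof -
  have ini: "\<forall>q0 \<in> init (sync S G). \<exists>p0 \<in> init R. (q0, p0) \<in> Phi"
   and fw: "\<And>q p e q'. (q, p) \<in> Phi \<Longrightarrow> step (sync S G) q e q' \<Longrightarrow> (\<exists>p'. step R p e p' \<and> (q', p') \<in> Phi)"
   and bw: "\<And>q p e p'. (q, p) \<in> Phi \<Longrightarrow> e \<in> Er \<Longrightarrow> step R p e p' \<Longrightarrow> (\<exists>q'. step (sync S G) q e q' \<and> (q', p') \<in> Phi)"
    using assms(5) unfolding cc_simulation_def by blast+
  have adm: "\<And>y x e. reachable (sync S G) (y, x) \<Longrightarrow> e \<in> Euc \<Longrightarrow> enabled G x e \<Longrightarrow> enabled (sync S G) (y, x) e"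
    using assms(4) unfolding admissible_def by blast
  have matchy: "match G R (theta S G Phi y) e (theta S G Phi y')" if "step S y e y'" for y e y'
    unfolding match_def theta_def
  proof (intro allI impI)
    fix x z x'
    assume a: "(x, z) \<in> {(x, z). ((y, x), z) \<in> Phi \<and> reachable (sync S G) (y, x)}" and b: "step G x e x'"
    have st: "step (sync S G) (y, x) e (y', x')" using that b sync_step by metis
    with a fw obtain z' where "step R z e z'" "((y', x'), z') \<in> Phi" by blast
    moreover have "reachable (sync S G) (y', x')" using reach_step[OF _ st] a by simp
    ultimately show "\<exists>z'. step R z e z' \<and> (x', z') \<in> {(x, z). ((y', x), z) \<in> Phi \<and> reachable (sync S G) (y', x)}"
      by blast
  qed
  have A: "\<exists>W0 \<in> E_of S G Phi. \<forall>x0 \<in> init G. \<exists>z0 \<in> init R. (x0, z0) \<in> W0"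
  proof -
    obtain y0 where y0: "y0 \<in> init S" using assms(3) unfolding is_automaton_def by blast
    have "\<forall>x0 \<in> init G. \<exists>z0 \<in> init R. (x0, z0) \<in> theta S G Phi y0"
    proof
      fix x0 assume "x0 \<in> init G"
      hence i: "(y0, x0) \<in> init (sync S G)" using y0 unfolding sync_def by simp
      then obtain z0 where "z0 \<in> init R" "((y0, x0), z0) \<in> Phi" using ini by blast
      thus "\<exists>z0 \<in> init R. (x0, z0) \<in> theta S G Phi y0"
        using reach_init[OF i] unfolding theta_def by blast
    qed
    thus ?thesis unfolding E_of_def by blast
  qed
  have B: "\<forall>W \<in> E_of S G Phi. \<forall>e \<in> Euc. \<exists>W' \<in> E_of S G Phi. match G R W e W'"
  proof (intro ballI)
    fix W e assume W: "W \<in> E_of S G Phi" and e: "e \<in> Euc"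
    then obtain y where Wy: "W = theta S G Phi y" unfolding E_of_def by blast
    show "\<exists>W' \<in> E_of S G Phi. match G R W e W'"
    proof (cases "\<exists>y'. step S y e y'")
      case True
      then obtain y' where "step S y e y'" by blast
      thus ?thesis using matchy Wy unfolding E_of_def by blast
    next
      case False
      have "match G R W e W"
        unfolding match_def
      proof (intro allI impI)
        fix x z x' assume "(x, z) \<in> W" "step G x e x'"
        hence "reachable (sync S G) (y, x)" "enabled G x e"
          using Wy unfolding theta_def enabled_def by auto
        hence "enabled (sync S G) (y, x) e" using adm e by blast
        then obtain q where "step (sync S G) (y, x) e q" unfolding enabled_def by blast
        then obtain y' x'' where "step (sync S G) (y, x) e (y', x'')" by (cases q) auto
        hence "step S y e y'" using sync_step by metis
        with False show "\<exists>z'. step R z e z' \<and> (x', z') \<in> W" by blast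
      qed
      thus ?thesis using W by blast
    qed
  qed
  have C: "\<forall>W \<in> E_of S G Phi. \<forall>x z e z'. (x, z) \<in> W \<longrightarrow> e \<in> Er \<longrightarrow> step R z e z' \<longrightarrow>
        (\<exists>x' W'. step G x e x' \<and> W' \<in> E_of S G Phi \<and> (x', z') \<in> W' \<and> match G R W e W')"
  proof (intro ballI allI impI)
    fix W x z e z' assume W: "W \<in> E_of S G Phi" and xz: "(x, z) \<in> W" and e: "e \<in> Er" and st: "step R z e z'"
    then obtain y where Wy: "W = theta S G Phi y" unfolding E_of_def by blast
    with xz have P: "((y, x), z) \<in> Phi" and rc: "reachable (sync S G) (y, x)" unfolding theta_def by auto
    obtain q where q: "step (sync S G) (y, x) e q" "(q, z') \<in> Phi" using bw[OF P e st] by blast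
    obtain y' x' where qq: "q = (y', x')" by (cases q)
    have s: "step S y e y'" "step G x e x'" using q(1) qq sync_step by metis+
    have "(x', z') \<in> theta S G Phi y'" using q qq reach_step[OF rc] unfolding theta_def by simp
    moreover have "theta S G Phi y' \<in> E_of S G Phi" unfolding E_of_def by blast
    ultimately show "\<exists>x' W'. step G x e x' \<and> W' \<in> E_of S G Phi \<and> (x', z') \<in> W' \<and> match G R W e W'"
      using s matchy Wy by blast
  qed
  show ?thesis unfolding controllability_set_def using A B C by blast
qed

end
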